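(* Assume (C1) and (C2). Then for every $u\in\mathbb{R}^{\mathbb{Z}_K\times\mathbb{Z}_M}$, $\sum_{k\in\mathbb{Z}_K}\sum_{j\in\mathbb{Z}_M}\big(u_{k,j}B_{k,j}(u)-\partial_{k,j}B_{k,j}(u)\big)=0.$
   Context: Fix integers $K,M\ge1$; $\mathbb{Z}_m=\mathbb{Z}/m\mathbb{Z}$, $\mathbb{Z}_m^*=\mathbb{Z}_m\setminus\{0\}$; component indices modulo $K$, site indices modulo $M$. Real coefficients $\alpha_k$, $\beta_k^l,\gamma_k^l$ ($l\in\mathbb{Z}_K^*$), $\lambda_k^{k-l,k-l'}$ ($l,l'\in\mathbb{Z}_K^*$, $l\ne l'$) are given. For $u\in\mathbb{R}^{\mathbb{Z}_K\times\mathbb{Z}_M}$: $w_{k,j}=\frac13(u_{k,j}^2+u_{k,j}u_{k,j+1}+u_{k,j+1}^2)$, $b_{k,j}^l=\frac12(u_{k,j}u_{k+l,j}+u_{k,j+1}u_{k+l,j+1})$, $r_{k,j}^l=u_{k-l,j}u_{k-l,j+1}$, $p_{k,j}^{l,l'}=\frac16(2u_{k-l,j}u_{k-l',j}+u_{k-l,j}u_{k-l',j+1}+u_{k-l,j+1}u_{k-l',j}+2u_{k-l,j+1}u_{k-l',j+1})$, $G_{k,j}=\alpha_k w_{k,j}+\sum_{l\in\mathbb{Z}_K^*}\beta_k^l b_{k,j}^l+\sum_{l\in\mathbb{Z}_K^*}\gamma_k^l r_{k,j}^l+\sum_{l\in\mathbb{Z}_K^*}\sum_{l'\in\mathbb{Z}_K^*,l'\ne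 l}\lambda_k^{k-l,k-l'}p_{k,j}^{l,l'}$, $B_{k,j}(u)=G_{k,j}-G_{k,j-1}$; $\partial_{k,j}=\partial/\partial u_{k,j}$. (C1) $\beta_k^a=2\gamma_{k+a}^a$ for all $k$, $a\in\mathbb{Z}_K^*$; (C2) $\lambda_k^{k-a,k-a'}=\lambda_k^{k-a',k-a}=\lambda_{k-a}^{k,k-a'}$ for all $k$ and $a,a'\in\mathbb{Z}_K^*$, $a\ne a'$. *)

theory Defs
  imports "HOL-Analysis.Analysis"
begin

text \<open>Configurations u in R^(Z_K x Z_M) are represented by functions
  u :: int * int => real, of which only the values at (k,j) with
  0 <= k < K, 0 <= j < M matter; all indices are reduced mod K resp. mod M.
  Z_K^* is represented by {1..<K}.  Coefficients are functions of int
  arguments that are only evaluated at reduced indices.\<close>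

definition uu :: "int \<Rightarrow> int \<Rightarrow> (int \<times> int \<Rightarrow> real) \<Rightarrow> int \<Rightarrow> int \<Rightarrow> real" where
  "uu K M u k j = u (k mod K, j mod M)"

definition wt :: "int \<Rightarrow> int \<Rightarrow> (int \<times> int \<Rightarrow> real) \<Rightarrow> int \<Rightarrow> int \<Rightarrow> real" where
  "wt K M u k j = (1/3) * ((uu K M u k j)^2 + uu K M u k j * uu K M u k (j+1) + (uu K M u k (j+1))^2)"

definition bt :: "int \<Rightarrow> int \<Rightarrow> (int \<times> int \<Rightarrow> real) \<Rightarrow> int \<Rightarrow> int \<Rightarrow> int \<Rightarrow> real" where
  "bt K M u k j l = (1/2) * (uu K M u k j * uu K M u (k+l) j + uu K M u k (j+1) * uu K M u (k+l) (j+1))"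

definition rt :: "int \<Rightarrow> int \<Rightarrow> (int \<times> int \<Rightarrow> real) \<Rightarrow> int \<Rightarrow> int \<Rightarrow> int \<Rightarrow> real" where
  "rt K M u k j l = uu K M u (k-l) j * uu K M u (k-l) (j+1)"

definition pt :: "int \<Rightarrow> int \<Rightarrow> (int \<times> int \<Rightarrow> real) \<Rightarrow> int \<Rightarrow> int \<Rightarrow> int \<Rightarrow> int \<Rightarrow> real" where
  "pt K M u k j l l' = (1/6) * (2 * uu K M u (k-l) j * uu K M u (k-l') j
      + uu K M u (k-l) j * uu K M u (k-l') (j+1)
      + uu K M u (k-l) (j+1) * uu K M u (k-l') j
      + 2 * uu K M u (k-l) (j+1) * uu K M u (k-l') (j+1))"

definition Gt :: "int \<Rightarrow> int \<Rightarrow> (int \<Rightarrow> real) \<Rightarrow> (int \<Rightarrow> int \<Rightarrow> real) \<Rightarrow> (int \<Rightarrow> int \<Rightarrow> real)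
    \<Rightarrow> (int \<Rightarrow> int \<Rightarrow> int \<Rightarrow> real) \<Rightarrow> (int \<times> int \<Rightarrow> real) \<Rightarrow> int \<Rightarrow> int \<Rightarrow> real" where
  "Gt K M alpha beta gamma lam u k j =
     alpha (k mod K) * wt K M u k j
     + (\<Sum>l\<in>{1..<K}. beta (k mod K) l * bt K M u k j l)
     + (\<Sum>l\<in>{1..<K}. gamma (k mod K) l * rt K M u k j l)
     + (\<Sum>l\<in>{1..<K}. \<Sum>l'\<in>{1..<K} - {l}.
          lam (k mod K) ((k-l) mod K) ((k-l') mod K) * pt K M u k j l l')"

definition Bt :: "int \<Rightarrow> int \<Rightarrow> (int \<Rightarrow> real) \<Rightarrow> (int \<Rightarrow> int \<Rightarrow> real) \<Rightarrow> (int \<Rightarrow> int \<Rightarrow> real)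
    \<Rightarrow> (int \<Rightarrow> int \<Rightarrow> int \<Rightarrow> real) \<Rightarrow> (int \<times> int \<Rightarrow> real) \<Rightarrow> int \<Rightarrow> int \<Rightarrow> real" where
  "Bt K M alpha beta gamma lam u k j =
     Gt K M alpha beta gamma lam u k j - Gt K M alpha beta gamma lam u k (j-1)"

definition pderiv_at :: "int \<Rightarrow> int \<Rightarrow> ((int \<times> int \<Rightarrow> real) \<Rightarrow> real) \<Rightarrow> (int \<times> int \<Rightarrow> real) \<Rightarrow> int \<Rightarrow> int \<Rightarrow> real" where
  "pderiv_at K M F u k j = deriv (\<lambda>t. F (u((k mod K, j mod M) := t))) (u (k mod K, j mod M))"

end

theory Submission
  imports Defs
begin

lemma uu_mod1[simp]: "uu K M u (k mod K) j = uu K M u k j" by (simp add: uu_def)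
lemma uu_mod2[simp]: "uu K M u k (j mod M) = uu K M u k j" by (simp add: uu_def)
lemma uu_upd: "uu K M (u((k0,j0):=t)) k j = (if k mod K = k0 \<and> j mod M = j0 then t else uu K M u k j)"
  by (auto simp: uu_def)

lemma sum_shift_mod:
  fixes f :: "int \<Rightarrow> real"
  assumes N: "N \<ge> 1" and per: "\<And>x. f (x mod N) = f x"
  shows "(\<Sum>x\<in>{0..<N}. f (x + c)) = (\<Sum>x\<in>{0..<N}. f x)"
proof -
  have "(\<Sum>x\<in>{0..<N}. f ((x + c) mod N)) = (\<Sum>x\<in>{0..<N}. f x)"
  proof (rule sum.reindex_bij_witness[where i="\<lambda>x. (x - c) mod N" and j="\<lambda>x. (x+c) mod N"])
    fix a assume a: "a \<in> {0..<N}"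
    show "((a + c) mod N - c) mod N = a" using a by (simp add: mod_diff_left_eq)
    show "(a + c) mod N \<in> {0..<N}" using N by simp
    show "((a - c) mod N + c) mod N = a" using a by (simp add: mod_add_left_eq)
    show "(a - c) mod N \<in> {0..<N}" using N by simp
    show "f ((a + c) mod N) = f ((a + c) mod N)" ..
  qed
  then show ?thesis by (simp add: per)
qed

lemma telescope_mod:
  fixes h :: "int \<Rightarrow> real"
  assumes N: "N \<ge> 1" and per: "\<And>x. h (x mod N) = h x"
  shows "(\<Sum>x\<in>{0..<N}. h x - h (x + 1)) = 0"
  using sum_shift_mod[of N h 1, OF N per] by (simp add: sum_subtractf)

lemma mod_ne1:
  fixes k l K :: int
  assumes k: "k \<in> {0..<K}" and l: "l \<in> {1..<K}"
  shows "(k + l) mod K \<noteq> k" "(k - l) mod K \<noteq> k"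
proof -
  have "(k + l) mod K = (if k + l < K then k + l else k + l - K)"
  proof (cases "k + l < K")
    case True thus ?thesis using k l by simp
  next
    case False
    have "(k + l) mod K = (k + l - K) mod K" using mod_add_self2[of "k+l-K" K] by simp
    also have "\<dots> = k + l - K" using False k l by (intro mod_pos_pos_trivial) auto
    finally show ?thesis using False by simp
  qed
  thus "(k + l) mod K \<noteq> k" using k l by auto
  have "(k - l) mod K = (if l \<le> k then k - l else k - l + K)"
  proof (cases "l \<le> k")
    case True thus ?thesis using k l by simp
  next
    case False
    have "(k - l) mod K = (k - l + K) mod K" by simp
    also have "\<dots> = k - l + K" using False k l by (intro mod_pos_pos_trivial) auto
    finally show ?thesis using False by simp
  qed
  thus "(k - l) mod K \<noteq> k" using k l by auto
qed

lemma Gt_upd0: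
  assumes K: "K \<ge> 1" and M: "M \<ge> 2" and k: "k \<in> {0..<K}" and j: "j \<in> {0..<M}"
  shows "Gt K M alpha beta gamma lam (u((k,j):=t)) k j =
     alpha k * ((t^2 + t*uu K M u k (j+1) + (uu K M u k (j+1))^2)/3)
     + (\<Sum>l\<in>{1..<K}. beta k l * ((t*uu K M u (k+l) j + uu K M u k (j+1) * uu K M u (k+l) (j+1))/2))
     + (\<Sum>l\<in>{1..<K}. gamma k l * rt K M u k j l)
     + (\<Sum>l\<in>{1..<K}. \<Sum>l'\<in>{1..<K} - {l}.
          lam k ((k-l) mod K) ((k-l') mod K) * pt K M u k j l l')"
proof -
  have km: "k mod K = k" and jm: "j mod M = j" using k j by auto
  have j1: "(j+1) mod M \<noteq> j" using mod_ne1(1)[of j M 1] j M by simp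
  have kl: "\<And>l. l \<in> {1..<K} \<Longrightarrow> (k + l) mod K \<noteq> k \<and> (k - l) mod K \<noteq> k"
    using mod_ne1[OF k] by blast
  show ?thesis
    unfolding Gt_def wt_def bt_def rt_def pt_def uu_upd
    apply (simp add: km jm j1)
    apply (intro arg_cong2[where f="(+)"] sum.cong refl)
    using kl by (auto simp: field_simps power2_eq_square)
qed


lemma Gt_upd1:
  assumes K: "K \<ge> 1" and M: "M \<ge> 2" and k: "k \<in> {0..<K}" and j: "j \<in> {0..<M}"
  shows "Gt K M alpha beta gamma lam (u((k,j):=t)) k (j-1) =
     alpha k * (((uu K M u k (j-1))^2 + uu K M u k (j-1) * t + t^2)/3)
     + (\<Sum>l\<in>{1..<K}. beta k l * ((uu K M u k (j-1) * uu K M u (k+l) (j-1) + t * uu K M u (k+l) j)/2))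
     + (\<Sum>l\<in>{1..<K}. gamma k l * rt K M u k (j-1) l)
     + (\<Sum>l\<in>{1..<K}. \<Sum>l'\<in>{1..<K} - {l}.
          lam k ((k-l) mod K) ((k-l') mod K) * pt K M u k (j-1) l l')"
proof -
  have km: "k mod K = k" and jm: "j mod M = j" using k j by auto
  have j1: "(j-1) mod M \<noteq> j" using mod_ne1(2)[of j M 1] j M by simp
  have kl: "\<And>l. l \<in> {1..<K} \<Longrightarrow> (k + l) mod K \<noteq> k \<and> (k - l) mod K \<noteq> k"
    using mod_ne1[OF k] by blast
  show ?thesis
    unfolding Gt_def wt_def bt_def rt_def pt_def uu_upd
    apply (simp add: km jm j1)
    apply (intro arg_cong2[where f="(+)"] sum.cong refl)
    using kl by (auto simp: field_simps power2_eq_square)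
qed

lemma lin_id: fixes a b c t Sb S1 S2 S3 S1' S2' S3' :: real
  shows "a*((t^2+t*b+b^2)/3) + (Sb + S1) + S2 + S3 - (a*((c^2+c*t+t^2)/3) + (Sb + S1') + S2' + S3')
   = a*(b-c)/3*t + (b^2/3*a - c^2/3*a + S1 + S2 + S3 - (S1' + S2' + S3'))"
  by (simp add: field_simps power2_eq_square)

lemma pderiv_val:
  assumes K: "K \<ge> 1" and M: "M \<ge> 2" and k: "k \<in> {0..<K}" and j: "j \<in> {0..<M}"
  shows "pderiv_at K M (\<lambda>v. Bt K M alpha beta gamma lam v k j) u k j
     = alpha k * (uu K M u k (j+1) - uu K M u k (j-1)) / 3"
proof -
  have km: "k mod K = k" and jm: "j mod M = j" using k j by auto
  let ?b = "uu K M u k (j+1)" and ?c = "uu K M u k (j-1)"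
  define C where "C = ?b^2/3 * alpha k - ?c^2/3 * alpha k
     + (\<Sum>l\<in>{1..<K}. beta k l * ((uu K M u k (j+1) * uu K M u (k+l) (j+1))/2))
     + (\<Sum>l\<in>{1..<K}. gamma k l * rt K M u k j l)
     + (\<Sum>l\<in>{1..<K}. \<Sum>l'\<in>{1..<K} - {l}.
          lam k ((k-l) mod K) ((k-l') mod K) * pt K M u k j l l')
     - ((\<Sum>l\<in>{1..<K}. beta k l * ((uu K M u k (j-1) * uu K M u (k+l) (j-1))/2))
     + (\<Sum>l\<in>{1..<K}. gamma k l * rt K M u k (j-1) l)
     + (\<Sum>l\<in>{1..<K}. \<Sum>l'\<in>{1..<K} - {l}.
          lam k ((k-l) mod K) ((k-l') mod K) * pt K M u k (j-1) l l'))"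
  have eq: "(\<lambda>t. Bt K M alpha beta gamma lam (u((k,j):=t)) k j)
      = (\<lambda>t. alpha k * (?b - ?c) / 3 * t + C)"
  proof
    fix t
    have s1: "(\<Sum>l\<in>{1..<K}. beta k l * ((t*uu K M u (k+l) j + uu K M u k (j+1) * uu K M u (k+l) (j+1))/2))
       = (\<Sum>l\<in>{1..<K}. beta k l * (t*uu K M u (k+l) j)/2) + (\<Sum>l\<in>{1..<K}. beta k l * ((uu K M u k (j+1) * uu K M u (k+l) (j+1))/2))"
      by (simp add: sum.distrib[symmetric] algebra_simps add_divide_distrib)
    have s2: "(\<Sum>l\<in>{1..<K}. beta k l * ((uu K M u k (j-1) * uu K M u (k+l) (j-1) + t * uu K M u (k+l) j)/2))
       = (\<Sum>l\<in>{1..<K}. beta k l * (t*uu K M u (k+l) j)/2) + (\<Sum>l\<in>{1..<K}. beta k l * ((uu K M u k (j-1) * uu K M u (k+l) (j-1))/2))"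
      by (simp add: sum.distrib[symmetric] algebra_simps add_divide_distrib)
    show "Bt K M alpha beta gamma lam (u((k,j):=t)) k j = alpha k * (?b - ?c) / 3 * t + C"
      unfolding Bt_def Gt_upd0[OF K M k j] Gt_upd1[OF K M k j] s1 s2 C_def
      by (rule lin_id)
  qed
  have "deriv (\<lambda>t. alpha k * (?b - ?c) / 3 * t + C) (u (k,j)) = alpha k * (?b - ?c) / 3"
    by (rule DERIV_imp_deriv) (auto intro!: derivative_eq_intros)
  thus ?thesis unfolding pderiv_at_def km jm eq .
qed

definition Tset :: "int \<Rightarrow> (int \<times> int \<times> int) set" where
  "Tset K = Sigma {0..<K} (\<lambda>k. Sigma ({0..<K}-{k}) (\<lambda>x. {0..<K}-{k,x}))"

lemma Tset_mem: "(k,x,y) \<in> Tset K \<longleftrightarrow> k \<in> {0..<K} \<and> x \<in> {0..<K} \<and> y \<in> {0..<K} \<and> x \<noteq> k \<and> y \<noteq> k \<and> y \<noteq> x"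
  by (auto simp: Tset_def)

lemma Tset_fin: "finite (Tset K)"
  unfolding Tset_def by auto

lemma mod_back: fixes k l K :: int assumes "l \<in> {0..<K}" shows "(k - (k - l) mod K) mod K = l"
  using assms by (simp add: mod_diff_right_eq)

lemma nzmod: fixes k z K :: int assumes K: "K \<ge> 1" and k: "k \<in> {0..<K}" and z: "z \<in> {0..<K}" and d: "z \<noteq> k"
  shows "(k - z) mod K \<in> {1..<K}"
proof -
  have "(k - z) mod K \<noteq> 0"
  proof
    assume "(k - z) mod K = 0"
    hence "(k - (k - z) mod K) mod K = k mod K" by simp
    thus False using mod_back[OF z, of k] k d by simp
  qed
  moreover have "0 \<le> (k - z) mod K" "(k - z) mod K < K" using K by simp_all
  ultimately show ?thesis by simp
qed

lemma reindex_T: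
  fixes G :: "int \<Rightarrow> int \<Rightarrow> int \<Rightarrow> real"
  assumes K: "K \<ge> 1"
  shows "(\<Sum>k\<in>{0..<K}. \<Sum>l\<in>{1..<K}. \<Sum>l'\<in>{1..<K}-{l}. G k ((k-l) mod K) ((k-l') mod K))
       = (\<Sum>(k,x,y)\<in>Tset K. G k x y)"
proof -
  have "(\<Sum>k\<in>{0..<K}. \<Sum>l\<in>{1..<K}. \<Sum>l'\<in>{1..<K}-{l}. G k ((k-l) mod K) ((k-l') mod K))
      = (\<Sum>k\<in>{0..<K}. \<Sum>(l,l')\<in>Sigma {1..<K} (\<lambda>l. {1..<K}-{l}). G k ((k-l) mod K) ((k-l') mod K))"
    by (rule sum.cong[OF refl], rule sum.Sigma) auto
  also have "\<dots> = (\<Sum>(k,l,l')\<in>Sigma {0..<K} (\<lambda>k. Sigma {1..<K} (\<lambda>l. {1..<K}-{l})). G k ((k-l) mod K) ((k-l') mod K))"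
    by (subst sum.Sigma) (auto simp: case_prod_beta)
  also have "\<dots> = (\<Sum>(k,x,y)\<in>Tset K. G k x y)"
  proof (rule sum.reindex_bij_witness[where i="\<lambda>(k,x,y). (k, (k-x) mod K, (k-y) mod K)"
          and j="\<lambda>(k,l,l'). (k, (k-l) mod K, (k-l') mod K)"])
    fix t assume t: "t \<in> Sigma {0..<K} (\<lambda>k. Sigma {1..<K} (\<lambda>l. {1..<K}-{l}))"
    then obtain k l l' where te: "t = (k,l,l')" and k: "k \<in> {0..<K}" and l: "l \<in> {1..<K}" and l': "l' \<in> {1..<K}" and ll: "l' \<noteq> l"
      by (cases t) force
    have b1: "(k - (k - l) mod K) mod K = l" "(k - (k - l') mod K) mod K = l'" using l l' mod_back by auto
    show "(case case t of (k, l, l') \<Rightarrow> (k, (k - l) mod K, (k - l') mod K) of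
          (k, x, y) \<Rightarrow> (k, (k - x) mod K, (k - y) mod K)) = t"
      using b1 te by simp
    have "(k - l') mod K \<noteq> (k - l) mod K" using b1 ll by metis
    then show "(case t of (k, l, l') \<Rightarrow> (k, (k - l) mod K, (k - l') mod K)) \<in> Tset K"
      using te k K mod_ne1[OF k l] mod_ne1[OF k l'] by (simp add: Tset_mem)
    show "(case case t of (k, l, l') \<Rightarrow> (k, (k - l) mod K, (k - l') mod K) of (k, x, y) \<Rightarrow> G k x y) =
         (case t of (k, l, l') \<Rightarrow> G k ((k - l) mod K) ((k - l') mod K))" using te by simp
  next
    fix t assume t: "t \<in> Tset K"
    then obtain k x y where te: "t = (k,x,y)" and k: "k \<in> {0..<K}" and x: "x \<in> {0..<K}" and y: "y \<in> {0..<K}"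
      and d: "x \<noteq> k" "y \<noteq> k" "y \<noteq> x"
      by (cases t) (auto simp: Tset_mem)
    have b1: "(k - (k - x) mod K) mod K = x" "(k - (k - y) mod K) mod K = y" using x y mod_back by auto
    show "(case case t of (k, x, y) \<Rightarrow> (k, (k - x) mod K, (k - y) mod K) of
          (k, l, l') \<Rightarrow> (k, (k - l) mod K, (k - l') mod K)) = t" using b1 te by simp
    have nz: "\<And>z. z \<in> {0..<K} \<Longrightarrow> z \<noteq> k \<Longrightarrow> (k - z) mod K \<in> {1..<K}"
      using nzmod[OF K k] by blast
    have "(k - y) mod K \<noteq> (k - x) mod K" using b1 d by metis
    then show "(case t of (k, x, y) \<Rightarrow> (k, (k - x) mod K, (k - y) mod K))
         \<in> Sigma {0..<K} (\<lambda>k. Sigma {1..<K} (\<lambda>l. {1..<K} - {l}))"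
      using te k nz[OF x d(1)] nz[OF y d(2)] by simp
  qed
  finally show ?thesis .
qed

lemma lam_cyc:
  fixes lam :: "int \<Rightarrow> int \<Rightarrow> int \<Rightarrow> real"
  assumes K: "K \<ge> 1"
    and C2: "\<And>k a a'. k \<in> {0..<K} \<Longrightarrow> a \<in> {1..<K} \<Longrightarrow> a' \<in> {1..<K} \<Longrightarrow> a \<noteq> a' \<Longrightarrow>
              lam k ((k - a) mod K) ((k - a') mod K) = lam k ((k - a') mod K) ((k - a) mod K)
            \<and> lam k ((k - a') mod K) ((k - a) mod K) = lam ((k - a) mod K) k ((k - a') mod K)"
    and t: "(k,x,y) \<in> Tset K"
  shows "lam x y k = lam k x y \<and> lam y k x = lam k x y"
proof -
  have c2: "lam k x y = lam k y x \<and> lam k y x = lam x k y" if t: "(k,x,y) \<in> Tset K" for k x y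
  proof -
    from t have k: "k \<in> {0..<K}" and x: "x \<in> {0..<K}" and y: "y \<in> {0..<K}" and d: "x \<noteq> k" "y \<noteq> k" "y \<noteq> x"
      by (auto simp: Tset_mem)
    have bx: "(k - (k - x) mod K) mod K = x" and by': "(k - (k - y) mod K) mod K = y" using x y mod_back by auto
    have ne: "(k - x) mod K \<noteq> (k - y) mod K" using bx by' d by metis
    show ?thesis using C2[OF k nzmod[OF K k x d(1)] nzmod[OF K k y d(2)] ne] unfolding bx by' .
  qed
  from t have k: "k \<in> {0..<K}" and x: "x \<in> {0..<K}" and y: "y \<in> {0..<K}" and d: "x \<noteq> k" "y \<noteq> k" "y \<noteq> x"
    by (auto simp: Tset_mem)
  have t2: "(x,y,k) \<in> Tset K" and t3: "(y,k,x) \<in> Tset K" using k x y d by (auto simp: Tset_mem)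
  show ?thesis using c2[OF t] c2[OF t2] c2[OF t3] by auto
qed

lemma P3:
  fixes a b :: "int \<Rightarrow> real" and lam :: "int \<Rightarrow> int \<Rightarrow> int \<Rightarrow> real"
  assumes K: "K \<ge> 1" and pa: "\<And>x. a (x mod K) = a x" and pb: "\<And>x. b (x mod K) = b x"
    and cyc: "\<And>k x y. (k,x,y) \<in> Tset K \<Longrightarrow> lam x y k = lam k x y \<and> lam y k x = lam k x y"
  shows "(\<Sum>k\<in>{0..<K}. (\<Sum>l\<in>{1..<K}. \<Sum>l'\<in>{1..<K}-{l}. lam k ((k-l) mod K) ((k-l') mod K) *
            ((2*a(k-l)*a(k-l') + a(k-l)*b(k-l') + b(k-l)*a(k-l') + 2*b(k-l)*b(k-l'))/6)) * (a k - b k))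
     = (\<Sum>(k,x,y)\<in>Tset K. lam k x y * a k * a x * a y)/3 - (\<Sum>(k,x,y)\<in>Tset K. lam k x y * b k * b x * b y)/3"
    (is "?L = ?R")
proof -
  define F where "F k x y = lam k x y * ((2*a x*a y + a x*b y + b x*a y + 2*b x*b y)/6) * (a k - b k)" for k x y
  have "?L = (\<Sum>k\<in>{0..<K}. \<Sum>l\<in>{1..<K}. \<Sum>l'\<in>{1..<K}-{l}. F k ((k-l) mod K) ((k-l') mod K))"
    by (simp add: F_def sum_distrib_right pa pb)
  also have "\<dots> = (\<Sum>(k,x,y)\<in>Tset K. F k x y)" by (rule reindex_T[OF K])
  finally have L: "?L = (\<Sum>(k,x,y)\<in>Tset K. F k x y)" .
  have r1: "(\<Sum>(k,x,y)\<in>Tset K. F x y k) = (\<Sum>(k,x,y)\<in>Tset K. F k x y)"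
    by (rule sum.reindex_bij_witness[where i="\<lambda>(k,x,y). (y,k,x)" and j="\<lambda>(k,x,y). (x,y,k)"])
       (auto simp: Tset_mem)
  have r2: "(\<Sum>(k,x,y)\<in>Tset K. F y k x) = (\<Sum>(k,x,y)\<in>Tset K. F k x y)"
    by (rule sum.reindex_bij_witness[where i="\<lambda>(k,x,y). (x,y,k)" and j="\<lambda>(k,x,y). (y,k,x)"])
       (auto simp: Tset_mem)
  have pw: "F k x y + F x y k + F y k x = lam k x y * a k * a x * a y - lam k x y * b k * b x * b y"
    if t: "(k,x,y) \<in> Tset K" for k x y
  proof -
    have e1: "lam x y k = lam k x y" and e2: "lam y k x = lam k x y" using cyc[OF t] by auto
    show ?thesis unfolding F_def e1 e2 by (simp add: field_simps)
  qed
  have "3 * (\<Sum>(k,x,y)\<in>Tset K. F k x y) = (\<Sum>(k,x,y)\<in>Tset K. F k x y + F x y k + F y k x)"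
    using r1 r2 by (simp add: sum.distrib case_prod_beta)
  also have "\<dots> = (\<Sum>(k,x,y)\<in>Tset K. lam k x y * a k * a x * a y - lam k x y * b k * b x * b y)"
    by (rule sum.cong[OF refl]) (use pw in auto)
  also have "\<dots> = (\<Sum>(k,x,y)\<in>Tset K. lam k x y * a k * a x * a y) - (\<Sum>(k,x,y)\<in>Tset K. lam k x y * b k * b x * b y)"
    by (simp add: sum_subtractf case_prod_beta)
  finally show ?thesis using L by simp
qed

lemma P2:
  fixes a b :: "int \<Rightarrow> real" and beta gamma :: "int \<Rightarrow> int \<Rightarrow> real"
  assumes K: "K \<ge> 1" and pa: "\<And>x. a (x mod K) = a x" and pb: "\<And>x. b (x mod K) = b x"
    and C1: "\<And>k a. k \<in> {0..<K} \<Longrightarrow> a \<in> {1..<K} \<Longrightarrow> beta k a = 2 * gamma ((k + a) mod K) a"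
  shows "(\<Sum>k\<in>{0..<K}. ((\<Sum>l\<in>{1..<K}. beta k l * ((a k * a (k+l) + b k * b (k+l))/2))
            + (\<Sum>l\<in>{1..<K}. gamma k l * (a (k-l) * b (k-l)))) * (a k - b k))
   = (\<Sum>k\<in>{0..<K}. \<Sum>l\<in>{1..<K}. gamma ((k+l) mod K) l * (a k)^2 * a (k+l))
   - (\<Sum>k\<in>{0..<K}. \<Sum>l\<in>{1..<K}. gamma ((k+l) mod K) l * (b k)^2 * b (k+l))"
proof -
  have g: "(\<Sum>k\<in>{0..<K}. (\<Sum>l\<in>{1..<K}. gamma k l * (a (k-l) * b (k-l))) * (a k - b k))
     = (\<Sum>k\<in>{0..<K}. \<Sum>l\<in>{1..<K}. gamma ((k+l) mod K) l * (a k * b k * (a (k+l) - b (k+l))))"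
  proof -
    have "(\<Sum>k\<in>{0..<K}. (\<Sum>l\<in>{1..<K}. gamma k l * (a (k-l) * b (k-l))) * (a k - b k))
       = (\<Sum>l\<in>{1..<K}. \<Sum>k\<in>{0..<K}. gamma (k mod K) l * (a (k-l) * b (k-l)) * (a k - b k))"
      by (subst sum.swap) (auto simp: sum_distrib_right intro!: sum.cong)
    also have "\<dots> = (\<Sum>l\<in>{1..<K}. \<Sum>k\<in>{0..<K}. gamma ((k + l) mod K) l * (a (k + l - l) * b (k + l -l)) * (a (k+l) - b (k+l)))"
    proof (rule sum.cong[OF refl])
      fix l
      let ?f = "\<lambda>k. gamma (k mod K) l * (a (k-l) * b (k-l)) * (a k - b k)"
      have per: "?f (x mod K) = ?f x" for x
      proof -
        have "a (x mod K - l) = a (x - l)" by (metis pa mod_diff_left_eq)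
        moreover have "b (x mod K - l) = b (x - l)" by (metis pb mod_diff_left_eq)
        ultimately show ?thesis by (simp add: pa pb)
      qed
      show "(\<Sum>k\<in>{0..<K}. ?f k) = (\<Sum>k\<in>{0..<K}. ?f (k + l))"
        using sum_shift_mod[of K ?f l, OF K per] by simp
    qed
    also have "\<dots> = (\<Sum>k\<in>{0..<K}. \<Sum>l\<in>{1..<K}. gamma ((k+l) mod K) l * (a k * b k * (a (k+l) - b (k+l))))"
      by (subst sum.swap) (simp add: mult.assoc)
    finally show ?thesis .
  qed
  have bt: "(\<Sum>k\<in>{0..<K}. (\<Sum>l\<in>{1..<K}. beta k l * ((a k * a (k+l) + b k * b (k+l))/2)) * (a k - b k))
     = (\<Sum>k\<in>{0..<K}. \<Sum>l\<in>{1..<K}. gamma ((k+l) mod K) l * ((a k * a (k+l) + b k * b (k+l)) * (a k - b k)))"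
    by (auto simp: sum_distrib_right C1 intro!: sum.cong)
  have "(\<Sum>k\<in>{0..<K}. ((\<Sum>l\<in>{1..<K}. beta k l * ((a k * a (k+l) + b k * b (k+l))/2))
            + (\<Sum>l\<in>{1..<K}. gamma k l * (a (k-l) * b (k-l)))) * (a k - b k))
      = (\<Sum>k\<in>{0..<K}. (\<Sum>l\<in>{1..<K}. beta k l * ((a k * a (k+l) + b k * b (k+l))/2)) * (a k - b k))
       + (\<Sum>k\<in>{0..<K}. (\<Sum>l\<in>{1..<K}. gamma k l * (a (k-l) * b (k-l))) * (a k - b k))"
    by (simp add: distrib_right sum.distrib)
  also have "\<dots> = (\<Sum>k\<in>{0..<K}. \<Sum>l\<in>{1..<K}. gamma ((k+l) mod K) l * (a k)^2 * a (k+l) - gamma ((k+l) mod K) l * (b k)^2 * b (k+l))"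
    unfolding bt g sum.distrib[symmetric]
    by (intro sum.cong refl) (simp add: algebra_simps power2_eq_square)
  also have "\<dots> = (\<Sum>k\<in>{0..<K}. \<Sum>l\<in>{1..<K}. gamma ((k+l) mod K) l * (a k)^2 * a (k+l))
   - (\<Sum>k\<in>{0..<K}. \<Sum>l\<in>{1..<K}. gamma ((k+l) mod K) l * (b k)^2 * b (k+l))"
    by (simp add: sum_subtractf)
  finally show ?thesis .
qed

lemma Gt_jmod: "Gt K M alpha beta gamma lam u k (j mod M) = Gt K M alpha beta gamma lam u k j"
  by (simp add: Gt_def wt_def bt_def rt_def pt_def uu_def mod_simps)

definition hfun :: "int \<Rightarrow> (int \<Rightarrow> real) \<Rightarrow> (int \<Rightarrow> int \<Rightarrow> real) \<Rightarrow> (int \<Rightarrow> int \<Rightarrow> int \<Rightarrow> real) \<Rightarrow> (int \<Rightarrow> real) \<Rightarrow> real" where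
  "hfun K alpha gamma lam a = (\<Sum>k\<in>{0..<K}. alpha k * (a k)^3/3)
     + (\<Sum>k\<in>{0..<K}. \<Sum>l\<in>{1..<K}. gamma ((k+l) mod K) l * (a k)^2 * a (k+l))
     + (\<Sum>(k,x,y)\<in>Tset K. lam k x y * a k * a x * a y)/3"

lemma Gexp:
  assumes k: "k \<in> {0..<K}"
  shows "Gt K M alpha beta gamma lam u k j =
     alpha k * (((uu K M u k j)^2 + uu K M u k j * uu K M u k (j+1) + (uu K M u k (j+1))^2)/3)
     + ((\<Sum>l\<in>{1..<K}. beta k l * ((uu K M u k j * uu K M u (k+l) j + uu K M u k (j+1) * uu K M u (k+l) (j+1))/2))
     + (\<Sum>l\<in>{1..<K}. gamma k l * (uu K M u (k-l) j * uu K M u (k-l) (j+1))))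
     + (\<Sum>l\<in>{1..<K}. \<Sum>l'\<in>{1..<K}-{l}. lam k ((k-l) mod K) ((k-l') mod K) *
            ((2*uu K M u (k-l) j*uu K M u (k-l') j + uu K M u (k-l) j*uu K M u (k-l') (j+1)
              + uu K M u (k-l) (j+1)*uu K M u (k-l') j + 2*uu K M u (k-l) (j+1)*uu K M u (k-l') (j+1))/6))"
proof -
  have km: "k mod K = k" using k by auto
  show ?thesis
    unfolding Gt_def wt_def bt_def rt_def pt_def km
    apply (simp only: add.assoc)
    apply (intro arg_cong2[where f="(+)"] sum.cong refl)
    by (auto simp: field_simps)
qed

lemma perj:
  fixes K M :: int and alpha :: "int \<Rightarrow> real" and beta gamma :: "int \<Rightarrow> int \<Rightarrow> real"
    and lam :: "int \<Rightarrow> int \<Rightarrow> int \<Rightarrow> real" and u :: "int \<times> int \<Rightarrow> real"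
  assumes K: "K \<ge> 1"
    and C1: "\<And>k a. k \<in> {0..<K} \<Longrightarrow> a \<in> {1..<K} \<Longrightarrow> beta k a = 2 * gamma ((k + a) mod K) a"
    and cyc: "\<And>k x y. (k,x,y) \<in> Tset K \<Longrightarrow> lam x y k = lam k x y \<and> lam y k x = lam k x y"
  shows "(\<Sum>k\<in>{0..<K}. Gt K M alpha beta gamma lam u k j * (uu K M u k j - uu K M u k (j+1)))
     = hfun K alpha gamma lam (\<lambda>k. uu K M u k j) - hfun K alpha gamma lam (\<lambda>k. uu K M u k (j+1))"
proof -
  define a where "a = (\<lambda>k. uu K M u k j)"
  define b where "b = (\<lambda>k. uu K M u k (j+1))"
  have pa: "\<And>x. a (x mod K) = a x" and pb: "\<And>x. b (x mod K) = b x" by (simp_all add: a_def b_def)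
  have "(\<Sum>k\<in>{0..<K}. Gt K M alpha beta gamma lam u k j * (a k - b k))
     = (\<Sum>k\<in>{0..<K}. alpha k * (((a k)^2 + a k * b k + (b k)^2)/3) * (a k - b k))
     + (\<Sum>k\<in>{0..<K}. ((\<Sum>l\<in>{1..<K}. beta k l * ((a k * a (k+l) + b k * b (k+l))/2))
            + (\<Sum>l\<in>{1..<K}. gamma k l * (a (k-l) * b (k-l)))) * (a k - b k))
     + (\<Sum>k\<in>{0..<K}. (\<Sum>l\<in>{1..<K}. \<Sum>l'\<in>{1..<K}-{l}. lam k ((k-l) mod K) ((k-l') mod K) *
            ((2*a(k-l)*a(k-l') + a(k-l)*b(k-l') + b(k-l)*a(k-l') + 2*b(k-l)*b(k-l'))/6)) * (a k - b k))"
    (is "_ = sum ?X _ + sum ?Y _ + sum ?Z _")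
  proof -
    have "(\<Sum>k\<in>{0..<K}. Gt K M alpha beta gamma lam u k j * (a k - b k)) = (\<Sum>k\<in>{0..<K}. ?X k + ?Y k + ?Z k)"
      by (intro sum.cong refl) (simp only: Gexp a_def b_def distrib_right)
    thus ?thesis by (simp only: sum.distrib)
  qed
  also have "\<dots> = hfun K alpha gamma lam a - hfun K alpha gamma lam b"
  proof -
    have e1: "sum ?X {0..<K} = (\<Sum>k\<in>{0..<K}. alpha k * (a k)^3/3) - (\<Sum>k\<in>{0..<K}. alpha k * (b k)^3/3)"
      unfolding sum_subtractf[symmetric]
      by (intro sum.cong refl) (simp add: power3_eq_cube power2_eq_square algebra_simps diff_divide_distrib add_divide_distrib)
    have e2: "sum ?Y {0..<K} = (\<Sum>k\<in>{0..<K}. \<Sum>l\<in>{1..<K}. gamma ((k+l) mod K) l * (a k)^2 * a (k+l))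
       - (\<Sum>k\<in>{0..<K}. \<Sum>l\<in>{1..<K}. gamma ((k+l) mod K) l * (b k)^2 * b (k+l))"
      by (rule P2) (use K pa pb C1 in auto)
    have e3: "sum ?Z {0..<K} = (\<Sum>(k,x,y)\<in>Tset K. lam k x y * a k * a x * a y)/3 - (\<Sum>(k,x,y)\<in>Tset K. lam k x y * b k * b x * b y)/3"
      by (rule P3) (use K pa pb cyc in auto)
    show ?thesis unfolding e1 e2 e3 hfun_def by simp
  qed
  finally show ?thesis by (simp add: a_def b_def)
qed

lemma Bt_M1: "Bt K 1 alpha beta gamma lam v k j = 0"
  by (simp add: Bt_def Gt_def wt_def bt_def rt_def pt_def uu_def)

theorem lemma3p3:
  fixes K M :: int
    and alpha :: "int \<Rightarrow> real"
    and beta gamma :: "int \<Rightarrow> int \<Rightarrow> real"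
    and lam :: "int \<Rightarrow> int \<Rightarrow> int \<Rightarrow> real"
    and u :: "int \<times> int \<Rightarrow> real"
  assumes K: "K \<ge> 1" and M: "M \<ge> 1"
    and C1: "\<And>k a. k \<in> {0..<K} \<Longrightarrow> a \<in> {1..<K} \<Longrightarrow> beta k a = 2 * gamma ((k + a) mod K) a"
    and C2: "\<And>k a a'. k \<in> {0..<K} \<Longrightarrow> a \<in> {1..<K} \<Longrightarrow> a' \<in> {1..<K} \<Longrightarrow> a \<noteq> a' \<Longrightarrow>
              lam k ((k - a) mod K) ((k - a') mod K) = lam k ((k - a') mod K) ((k - a) mod K)
            \<and> lam k ((k - a') mod K) ((k - a) mod K) = lam ((k - a) mod K) k ((k - a') mod K)"
  shows "(\<Sum>k\<in>{0..<K}. \<Sum>j\<in>{0..<M}.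
            uu K M u k j * Bt K M alpha beta gamma lam u k j
            - pderiv_at K M (\<lambda>v. Bt K M alpha beta gamma lam v k j) u k j) = 0"
proof (cases "M = 1")
  case True
  show ?thesis unfolding True Bt_M1 pderiv_at_def by simp
next
  case False
  hence M2: "M \<ge> 2" using M by simp
  let ?U = "\<lambda>k j. uu K M u k j"
  let ?G = "\<lambda>k j. Gt K M alpha beta gamma lam u k j"
  have cyc: "\<And>k x y. (k,x,y) \<in> Tset K \<Longrightarrow> lam x y k = lam k x y \<and> lam y k x = lam k x y"
    by (rule lam_cyc[OF K C2]) auto
  have inner: "(\<Sum>j\<in>{0..<M}. ?U k j * Bt K M alpha beta gamma lam u k j
            - pderiv_at K M (\<lambda>v. Bt K M alpha beta gamma lam v k j) u k j)
        = (\<Sum>j\<in>{0..<M}. ?G k j * (?U k j - ?U k (j+1)))" if k: "k \<in> {0..<K}" for k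
  proof -
    have s1: "(\<Sum>j\<in>{0..<M}. ?U k (j+1)) = (\<Sum>j\<in>{0..<M}. ?U k j)"
      by (rule sum_shift_mod) (use M in auto)
    have s2: "(\<Sum>j\<in>{0..<M}. ?U k (j-1)) = (\<Sum>j\<in>{0..<M}. ?U k j)"
      using sum_shift_mod[of M "\<lambda>j. ?U k j" "-1"] M by simp
    have s3: "(\<Sum>j\<in>{0..<M}. ?U k j * ?G k (j-1)) = (\<Sum>j\<in>{0..<M}. ?U k (j+1) * ?G k j)"
    proof -
      have per: "?U k (x mod M) * ?G k (x mod M - 1) = ?U k x * ?G k (x - 1)" for x
      proof -
        have "?G k (x mod M - 1) = ?G k ((x mod M - 1) mod M)" by (simp only: Gt_jmod)
        also have "\<dots> = ?G k ((x - 1) mod M)" by (simp add: mod_diff_left_eq)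
        also have "\<dots> = ?G k (x - 1)" by (simp only: Gt_jmod)
        finally show ?thesis by simp
      qed
      show ?thesis using sum_shift_mod[of M "\<lambda>x. ?U k x * ?G k (x - 1)" 1, OF M per] by simp
    qed
    have "(\<Sum>j\<in>{0..<M}. ?U k j * Bt K M alpha beta gamma lam u k j
            - pderiv_at K M (\<lambda>v. Bt K M alpha beta gamma lam v k j) u k j)
        = (\<Sum>j\<in>{0..<M}. ?U k j * (?G k j - ?G k (j-1)) - alpha k * (?U k (j+1) - ?U k (j-1)) / 3)"
      by (rule sum.cong[OF refl], subst pderiv_val[OF K M2 k]) (auto simp: Bt_def)
    also have "\<dots> = (\<Sum>j\<in>{0..<M}. ?U k j * ?G k j) - (\<Sum>j\<in>{0..<M}. ?U k j * ?G k (j-1))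
          - alpha k / 3 * ((\<Sum>j\<in>{0..<M}. ?U k (j+1)) - (\<Sum>j\<in>{0..<M}. ?U k (j - 1)))"
      by (simp add: sum_subtractf sum_distrib_left right_diff_distrib diff_divide_distrib)
    also have "\<dots> = (\<Sum>j\<in>{0..<M}. ?U k j * ?G k j) - (\<Sum>j\<in>{0..<M}. ?U k (j+1) * ?G k j)"
      unfolding s1 s2 s3 by simp
    also have "\<dots> = (\<Sum>j\<in>{0..<M}. ?G k j * (?U k j - ?U k (j+1)))"
      by (simp add: sum_subtractf[symmetric] right_diff_distrib mult.commute)
    finally show ?thesis .
  qed
  have "(\<Sum>k\<in>{0..<K}. \<Sum>j\<in>{0..<M}.
            uu K M u k j * Bt K M alpha beta gamma lam u k j
            - pderiv_at K M (\<lambda>v. Bt K M alpha beta gamma lam v k j) u k j)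
      = (\<Sum>k\<in>{0..<K}. \<Sum>j\<in>{0..<M}. ?G k j * (?U k j - ?U k (j+1)))"
    by (rule sum.cong[OF refl]) (rule inner)
  also have "\<dots> = (\<Sum>j\<in>{0..<M}. \<Sum>k\<in>{0..<K}. ?G k j * (?U k j - ?U k (j+1)))"
    by (rule sum.swap)
  also have "\<dots> = (\<Sum>j\<in>{0..<M}. hfun K alpha gamma lam (\<lambda>k. ?U k j) - hfun K alpha gamma lam (\<lambda>k. ?U k (j+1)))"
    by (rule sum.cong[OF refl], rule perj) (use K C1 cyc in auto)
  also have "\<dots> = 0"
    by (rule telescope_mod[where h="\<lambda>j. hfun K alpha gamma lam (\<lambda>k. ?U k j)"]) (use M in auto)
  finally show ?thesis .
qed

end
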